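(* Let $t_0=\inf\{x:G([0,x])>0\}$. Then $\lim_{v\to\infty}\big(\Lambda(v)-v-t_0\big)=0$. If moreover $G(\{t_0\})>0$, then $\Lambda(v)=v+t_0$ for all $v\ge(1-G(\{t_0\}))/G(\{t_0\})$.
   Context: Model: Let $G$ be a probability measure on $[0,\infty)$. In $\mathbb Z^2$, every vertical edge has weight $1$ and every horizontal edge an independent random weight with law $G$; the passage time of a nearest-neighbour path is the sum of its edge weights; $T(u,w)$ is the infimum over paths from $u$ to $w$. For $v\ge0$, $\Lambda(v)=\lim_n\frac1nT((0,0),(n,\lceil vn\rceil))$ (a.s. limit, deterministic). *)

theory Defs
  imports "HOL-Probability.Probability"
begin

type_synonym vert = "int \<times> int"

text \<open>Environment: \<omega> (x,y) is the weight of the horizontal edge between (x,y) and (x+1,y).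
  Vertical edges have weight 1.\<close>

definition adj :: "vert \<Rightarrow> vert \<Rightarrow> bool" where
  "adj a b \<longleftrightarrow> \<bar>fst a - fst b\<bar> + \<bar>snd a - snd b\<bar> = 1"

definition edge_wt :: "(vert \<Rightarrow> real) \<Rightarrow> vert \<Rightarrow> vert \<Rightarrow> real" where
  "edge_wt \<omega> a b = (if snd a = snd b then \<omega> (min (fst a) (fst b), snd a) else 1)"

fun path_time :: "(vert \<Rightarrow> real) \<Rightarrow> vert list \<Rightarrow> real" where
  "path_time \<omega> [] = 0"
| "path_time \<omega> [a] = 0"
| "path_time \<omega> (a # b # rest) = edge_wt \<omega> a b + path_time \<omega> (b # rest)"

definition is_path :: "vert \<Rightarrow> vert \<Rightarrow> vert list \<Rightarrow> bool" where
  "is_path u w p \<longleftrightarrow> p \<noteq> [] \<and> hd p = u \<and> last p = w \<and>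
     (\<forall>i. Suc i < length p \<longrightarrow> adj (p ! i) (p ! Suc i))"

definition passage_time :: "(vert \<Rightarrow> real) \<Rightarrow> vert \<Rightarrow> vert \<Rightarrow> real" where
  "passage_time \<omega> u w = Inf {path_time \<omega> p | p. is_path u w p}"

definition env :: "real measure \<Rightarrow> (vert \<Rightarrow> real) measure" where
  "env G = PiM UNIV (\<lambda>_. G)"

end

theory Submission
  imports Defs
begin

lemma path_time_snoc: "p \<noteq> [] \<Longrightarrow> path_time \<omega> (p @ [z]) = path_time \<omega> p + edge_wt \<omega> (last p) z"
  by (induction \<omega> p rule: path_time.induct) auto

lemma is_path_snoc:
  assumes "is_path u w p" "adj w z" shows "is_path u z (p @ [z])"
  unfolding is_path_def
proof (intro conjI allI impI)
  show "p @ [z] \<noteq> []" by simp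
  show "hd (p @ [z]) = u" using assms(1) by (auto simp: is_path_def)
  show "last (p @ [z]) = z" by simp
  fix i assume i: "Suc i < length (p @ [z])"
  show "adj ((p @ [z]) ! i) ((p @ [z]) ! Suc i)"
  proof (cases "Suc i < length p")
    case True then show ?thesis using assms(1) by (auto simp: is_path_def nth_append)
  next
    case False
    then have "i = length p - 1" using i by auto
    moreover have "p \<noteq> []" using assms(1) by (auto simp: is_path_def)
    ultimately show ?thesis using assms by (auto simp: is_path_def nth_append last_conv_nth)
  qed
qed

definition Reach :: "(vert \<Rightarrow> real) \<Rightarrow> vert \<Rightarrow> vert \<Rightarrow> real \<Rightarrow> bool" where
  "Reach \<omega> u w c \<longleftrightarrow> (\<exists>p. is_path u w p \<and> path_time \<omega> p \<le> c)"

lemma Reach_refl: "Reach \<omega> u u 0"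
  unfolding Reach_def by (rule exI[of _ "[u]"]) (auto simp: is_path_def)

lemma Reach_mono: "Reach \<omega> u w c \<Longrightarrow> c \<le> c' \<Longrightarrow> Reach \<omega> u w c'"
  unfolding Reach_def by force

lemma Reach_step: "Reach \<omega> u w c \<Longrightarrow> adj w z \<Longrightarrow> Reach \<omega> u z (c + edge_wt \<omega> w z)"
  unfolding Reach_def
proof (elim exE conjE)
  fix p assume p: "is_path u w p" "path_time \<omega> p \<le> c" and a: "adj w z"
  have "p \<noteq> []" "last p = w" using p by (auto simp: is_path_def)
  then show "\<exists>p. is_path u z p \<and> path_time \<omega> p \<le> c + edge_wt \<omega> w z"
    using p a by (intro exI[of _ "p @ [z]"]) (auto simp: is_path_snoc path_time_snoc)
qed

lemma Reach_up: "Reach \<omega> u (x, a) c \<Longrightarrow> Reach \<omega> u (x, a + int k) (c + real k)"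
proof (induction k)
  case 0 then show ?case by simp
next
  case (Suc k)
  have "adj (x, a + int k) (x, a + int (Suc k))" by (simp add: adj_def)
  from Reach_step[OF Suc.IH[OF Suc.prems] this] show ?case
    by (simp add: edge_wt_def add.commute add.left_commute)
qed

lemma Reach_down: "Reach \<omega> u (x, a) c \<Longrightarrow> Reach \<omega> u (x, a - int k) (c + real k)"
proof (induction k)
  case 0 then show ?case by simp
next
  case (Suc k)
  have "adj (x, a - int k) (x, a - int (Suc k))" by (simp add: adj_def)
  from Reach_step[OF Suc.IH[OF Suc.prems] this] show ?case
    by (simp add: edge_wt_def add.commute add.left_commute)
qed

lemma Reach_vert: "Reach \<omega> u (x, a) c \<Longrightarrow> Reach \<omega> u (x, b) (c + \<bar>b - a\<bar>)"
proof (cases "a \<le> b")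
  case True
  assume r: "Reach \<omega> u (x, a) c"
  from Reach_up[OF r, of "nat (b - a)"] True show ?thesis by simp
next
  case False
  assume r: "Reach \<omega> u (x, a) c"
  from Reach_down[OF r, of "nat (a - b)"] False show ?thesis by simp
qed

lemma Reach_right: "Reach \<omega> u (x, y) c \<Longrightarrow> Reach \<omega> u (x + 1, y) (c + \<omega> (x, y))"
  using Reach_step[of \<omega> u "(x,y)" c "(x+1,y)"] by (simp add: adj_def edge_wt_def)

lemma path_time_nonneg: "(\<forall>i. \<omega> i \<ge> 0) \<Longrightarrow> path_time \<omega> p \<ge> 0"
  by (induction \<omega> p rule: path_time.induct) (auto simp: edge_wt_def intro: add_nonneg_nonneg)

lemma passage_le:
  assumes "\<forall>i. \<omega> i \<ge> 0" "Reach \<omega> u w c" shows "passage_time \<omega> u w \<le> c"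
proof -
  obtain p where p: "is_path u w p" "path_time \<omega> p \<le> c" using assms(2) by (auto simp: Reach_def)
  have "passage_time \<omega> u w \<le> path_time \<omega> p"
    unfolding passage_time_def
  proof (rule cInf_lower)
    show "path_time \<omega> p \<in> {path_time \<omega> p |p. is_path u w p}" using p by auto
    show "bdd_below {path_time \<omega> p |p. is_path u w p}"
      unfolding bdd_below_def using path_time_nonneg[OF assms(1)] by (intro exI[of _ 0]) auto
  qed
  with p show ?thesis by simp
qed

lemma path_lower:
  assumes "t \<ge> 0"
  shows "\<forall>i. \<omega> i \<ge> t \<Longrightarrow> p \<noteq> [] \<Longrightarrow> (\<forall>i. Suc i < length p \<longrightarrow> adj (p ! i) (p ! Suc i)) \<Longrightarrow>
     path_time \<omega> p \<ge> t * \<bar>fst (last p) - fst (hd p)\<bar> + \<bar>snd (last p) - snd (hd p)\<bar>"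
proof (induction \<omega> p rule: path_time.induct)
  case (3 \<omega> a b rest)
  have ad: "adj a b" using "3.prems"(3)[rule_format, of 0] by simp
  have IH: "path_time \<omega> (b # rest) \<ge> t * \<bar>fst (last (b#rest)) - fst b\<bar> + \<bar>snd (last (b#rest)) - snd b\<bar>"
    using "3.IH" "3.prems" by (auto intro!: "3.IH") (metis Suc_less_eq length_Cons nth_Cons_Suc)
  have e: "edge_wt \<omega> a b \<ge> t * \<bar>fst b - fst a\<bar> + \<bar>snd b - snd a\<bar>"
  proof (cases "snd a = snd b")
    case True
    then have "\<bar>fst b - fst a\<bar> = 1" using ad by (simp add: adj_def abs_minus_commute)
    moreover have "\<omega> (min (fst a) (fst b), snd a) \<ge> t" using "3.prems"(1) by blast
    ultimately show ?thesis using True by (simp add: edge_wt_def)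
  next
    case False
    then have "\<bar>snd b - snd a\<bar> = 1" "fst a = fst b" using ad by (auto simp: adj_def abs_minus_commute)
    then show ?thesis using False by (simp add: edge_wt_def)
  qed
  let ?l = "last (b # rest)"
  have t1: "t * \<bar>fst ?l - fst a\<bar> \<le> t * \<bar>fst ?l - fst b\<bar> + t * \<bar>fst b - fst a\<bar>"
    using assms(1) by (simp add: distrib_left[symmetric] mult_left_mono)
  have t2: "\<bar>real_of_int (snd ?l - snd a)\<bar> \<le> \<bar>snd ?l - snd b\<bar> + \<bar>snd b - snd a\<bar>" by linarith
  show ?case using IH e t1 t2 by simp
qed auto

lemma space_env: "sets G = sets borel \<Longrightarrow> space (env G) = UNIV"
  unfolding env_def by (simp add: space_PiM sets_eq_imp_space_eq[of G borel])

lemma coord_meas_G: "(\<lambda>\<omega>. \<omega> i) \<in> measurable (env G) G"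
  unfolding env_def using measurable_component_singleton[of i UNIV "\<lambda>_. G"] by simp

lemma coord_meas[measurable]: "sets G = sets borel \<Longrightarrow> (\<lambda>\<omega>. \<omega> i) \<in> borel_measurable (env G)"
  using coord_meas_G[of i G] measurable_cong_sets[OF refl, of G borel "env G"] by simp

lemma env_indep:
  assumes G: "prob_space G" "sets G = sets borel"
   and dA: "\<And>\<omega> \<omega>'. (\<And>i. i \<in> A \<Longrightarrow> \<omega> i = \<omega>' i) \<Longrightarrow> P \<omega> = P \<omega>'"
   and dB: "\<And>\<omega> \<omega>'. (\<And>i. i \<in> B \<Longrightarrow> \<omega> i = \<omega>' i) \<Longrightarrow> Q \<omega> = Q \<omega>'"
   and AB: "A \<inter> B = {}"
   and mP: "{\<omega> \<in> space (env G). P \<omega>} \<in> sets (env G)"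
   and mQ: "{\<omega> \<in> space (env G). Q \<omega>} \<in> sets (env G)"
  shows "emeasure (env G) {\<omega> \<in> space (env G). P \<omega> \<and> Q \<omega>} =
         emeasure (env G) {\<omega> \<in> space (env G). P \<omega>} * emeasure (env G) {\<omega> \<in> space (env G). Q \<omega>}"
proof -
  interpret M: prob_space "env G" unfolding env_def by (rule prob_space_PiM) (use G in auto)
  have ind: "M.indep_vars (\<lambda>_. G) (\<lambda>i \<omega>. \<omega> i) UNIV"
  proof (subst M.indep_vars_iff_distr_eq_PiM)
    show "(\<lambda>\<omega>. \<omega> i) \<in> measurable (env G) G" for i :: vert
      by (rule coord_meas_G)
    have "(\<Pi>\<^sub>M i\<in>UNIV. distr (env G) G (\<lambda>\<omega>. \<omega> i)) = (\<Pi>\<^sub>M i\<in>UNIV. G)"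
      unfolding env_def by (rule PiM_cong) (auto intro!: distr_PiM_component G)
    show "distr (env G) (Pi\<^sub>M UNIV (\<lambda>_. G)) (\<lambda>x. \<lambda>i\<in>UNIV. x i) = (\<Pi>\<^sub>M i\<in>UNIV. distr (env G) G (\<lambda>\<omega>. \<omega> i))"
    proof -
      have "(\<lambda>x::vert\<Rightarrow>real. restrict x UNIV) = (\<lambda>x. x)" by (auto simp: restrict_def)
      then show ?thesis using \<open>_ = (\<Pi>\<^sub>M i\<in>UNIV. G)\<close> by (simp add: env_def)
    qed
  qed auto
  have iv: "M.indep_var (PiM A (\<lambda>_. G)) (\<lambda>\<omega>. restrict (\<lambda>i. \<omega> i) A) (PiM B (\<lambda>_. G)) (\<lambda>\<omega>. restrict (\<lambda>i. \<omega> i) B)"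
    by (rule M.indep_var_restrict[OF ind AB]) auto
  define ext where "ext C \<xi> = (\<lambda>i. if i \<in> C then \<xi> i else (0::real))" for C and \<xi> :: "vert \<Rightarrow> real"
  have sG: "space G = UNIV" using sets_eq_imp_space_eq[OF G(2)] by simp
  have ext_meas: "ext C \<in> measurable (PiM C (\<lambda>_. G)) (env G)" for C
    unfolding env_def ext_def
  proof (rule measurable_PiM_single')
    fix i :: vert
    show "(\<lambda>\<omega>. if i \<in> C then \<omega> i else 0) \<in> Pi\<^sub>M C (\<lambda>_. G) \<rightarrow>\<^sub>M G"
    proof (cases "i \<in> C")
      case True then show ?thesis by (simp add: measurable_component_singleton)
    next
      case False then show ?thesis using sG by simp
    qed
  qed (auto simp: sG)
  let ?XA = "ext A -` {\<omega> \<in> space (env G). P \<omega>} \<inter> space (PiM A (\<lambda>_. G))"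
  let ?XB = "ext B -` {\<omega> \<in> space (env G). Q \<omega>} \<inter> space (PiM B (\<lambda>_. G))"
  have XA: "?XA \<in> sets (PiM A (\<lambda>_. G))" by (rule measurable_sets[OF ext_meas mP])
  have XB: "?XB \<in> sets (PiM B (\<lambda>_. G))" by (rule measurable_sets[OF ext_meas mQ])
  have eA: "P (ext A (restrict (\<lambda>i. \<omega> i) A)) = P \<omega>" for \<omega>
    by (rule dA) (simp add: ext_def)
  have eB: "Q (ext B (restrict (\<lambda>i. \<omega> i) B)) = Q \<omega>" for \<omega>
    by (rule dB) (simp add: ext_def)
  have spA: "restrict (\<lambda>i. \<omega> i) C \<in> space (PiM C (\<lambda>_. G))" for \<omega> :: "vert \<Rightarrow> real" and C
    by (simp add: space_PiM sG)
  have s1: "(\<lambda>x. (restrict (\<lambda>i. x i) A, restrict (\<lambda>i. x i) B)) -` (?XA \<times> ?XB) \<inter> space (env G)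
      = {\<omega> \<in> space (env G). P \<omega> \<and> Q \<omega>}"
    using eA eB spA by (auto simp: space_env[OF G(2)])
  have s2: "(\<lambda>x. restrict (\<lambda>i. x i) A) -` ?XA \<inter> space (env G) = {\<omega> \<in> space (env G). P \<omega>}"
    using eA spA by (auto simp: space_env[OF G(2)])
  have s3: "(\<lambda>x. restrict (\<lambda>i. x i) B) -` ?XB \<inter> space (env G) = {\<omega> \<in> space (env G). Q \<omega>}"
    using eB spA by (auto simp: space_env[OF G(2)])
  from M.indep_varD[OF iv XA XB] s1 s2 s3
  have "M.prob {\<omega> \<in> space (env G). P \<omega> \<and> Q \<omega>} = M.prob {\<omega> \<in> space (env G). P \<omega>} * M.prob {\<omega> \<in> space (env G). Q \<omega>}"
    by simp
  then show ?thesis by (simp add: M.emeasure_eq_measure ennreal_mult)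
qed

lemma cyl:
  assumes G: "prob_space G" and J: "finite J" and X: "\<And>i. i \<in> J \<Longrightarrow> X i \<in> sets G"
  shows "emeasure (env G) {\<omega> \<in> space (env G). \<forall>i\<in>J. \<omega> i \<in> X i} = (\<Prod>i\<in>J. emeasure G (X i))"
proof -
  have "{\<omega> \<in> space (env G). \<forall>i\<in>J. \<omega> i \<in> X i} = prod_emb UNIV (\<lambda>_. G) J (Pi\<^sub>E J X)"
    by (auto simp: prod_emb_def space_PiM env_def PiE_iff)
  then show ?thesis using emeasure_PiM_emb[of UNIV "\<lambda>_. G" J X] G J X by (simp add: env_def)
qed

definition gfirst :: "real \<Rightarrow> (vert \<Rightarrow> real) \<Rightarrow> nat \<Rightarrow> nat \<Rightarrow> nat" where
  "gfirst s \<omega> x y = (LEAST k. \<omega> (int x, int (y + k)) \<le> s)"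

fun Rh :: "real \<Rightarrow> (vert \<Rightarrow> real) \<Rightarrow> nat \<Rightarrow> nat" where
  "Rh s \<omega> 0 = 0"
| "Rh s \<omega> (Suc x) = Rh s \<omega> x + gfirst s \<omega> x (Rh s \<omega> x)"

lemma Rh_dep: "(\<And>i. fst i < int x \<Longrightarrow> \<omega> i = \<omega>' i) \<Longrightarrow> Rh s \<omega> x = Rh s \<omega>' x"
proof (induction x)
  case 0 then show ?case by simp
next
  case (Suc x)
  have IH: "Rh s \<omega> x = Rh s \<omega>' x" using Suc by auto
  have "gfirst s \<omega> x y = gfirst s \<omega>' x y" for y
    unfolding gfirst_def using Suc.prems by simp
  then show ?case using IH by simp
qed

lemma Rh_path:
  assumes good: "\<forall>x y. \<exists>k. \<omega> (int x, int (y + k)) \<le> s"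
  shows "Reach \<omega> (0,0) (int x, int (Rh s \<omega> x)) (real (Rh s \<omega> x) + real x * s)"
proof (induction x)
  case 0 then show ?case by (simp add: Reach_refl)
next
  case (Suc x)
  let ?y = "Rh s \<omega> x" and ?g = "gfirst s \<omega> x (Rh s \<omega> x)"
  have le: "\<omega> (int x, int (?y + ?g)) \<le> s"
    unfolding gfirst_def using good by (metis LeastI_ex)
  have "Reach \<omega> (0,0) (int x, int ?y + int ?g) (real ?y + real x * s + real ?g)"
    using Reach_up[OF Suc.IH, of ?g] by simp
  from Reach_right[OF this]
  have "Reach \<omega> (0,0) (int x + 1, int ?y + int ?g) (real ?y + real x * s + real ?g + \<omega> (int x, int ?y + int ?g))" .
  moreover have "(int x + 1, int ?y + int ?g) = (int (Suc x), int (Rh s \<omega> (Suc x)))" by simp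
  ultimately have "Reach \<omega> (0,0) (int (Suc x), int (Rh s \<omega> (Suc x))) (real ?y + real x * s + real ?g + \<omega> (int x, int ?y + int ?g))"
    by simp
  then show ?case
    by (rule Reach_mono) (use le in \<open>auto simp: algebra_simps\<close>)
qed

context
  fixes G :: "real measure" and s :: real
  assumes G: "prob_space G" "sets G = sets borel"
begin

interpretation M: prob_space "env G" unfolding env_def by (rule prob_space_PiM) (use G in auto)

lemma cm[measurable]: "(\<lambda>\<omega>. \<omega> i) \<in> borel_measurable (env G)"
  by (rule coord_meas[OF G(2)])

lemma gfirst_meas[measurable]: "(\<lambda>\<omega>. gfirst s \<omega> x y) \<in> measurable (env G) (count_space UNIV)"
  unfolding gfirst_def by measurable

lemma Rh_meas[measurable]: "(\<lambda>\<omega>. Rh s \<omega> x) \<in> measurable (env G) (count_space UNIV)"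
proof (induction x)
  case 0 then show ?case by simp
next
  case (Suc x)
  have "(\<lambda>\<omega>. gfirst s \<omega> x (Rh s \<omega> x)) \<in> measurable (env G) (count_space UNIV)"
    by (rule measurable_compose_countable[OF gfirst_meas Suc])
  then show ?case using Suc by simp
qed

lemma sG: "space G = UNIV" using sets_eq_imp_space_eq[OF G(2)] by simp

lemma spE: "space (env G) = UNIV" by (rule space_env[OF G(2)])

lemma G_gt: "emeasure G {s<..} = ennreal (1 - measure G {..s})"
proof -
  interpret G: prob_space G by (rule G(1))
  have "{s<..} = space G - {..s}" using sG by auto
  then have "measure G {s<..} = 1 - measure G {..s}"
    using G.prob_compl[of "{..s}"] G(2) by simp
  then show ?thesis by (simp add: G.emeasure_eq_measure)
qed

lemma col_cyl: "emeasure (env G) {\<omega> \<in> space (env G). \<forall>j\<le>t. s < \<omega> (int x, int (y + j))}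
   = ennreal ((1 - measure G {..s}) ^ Suc t)"
proof -
  let ?J = "(\<lambda>j. (int x, int (y + j))) ` {..t}"
  have inj: "inj_on (\<lambda>j. (int x, int (y + j))) {..t}" by (auto simp: inj_on_def)
  have "{\<omega> \<in> space (env G). \<forall>j\<le>t. s < \<omega> (int x, int (y + j))} = {\<omega> \<in> space (env G). \<forall>i\<in>?J. \<omega> i \<in> {s<..}}"
    by auto
  also have "emeasure (env G) \<dots> = (\<Prod>i\<in>?J. emeasure G {s<..})"
    by (rule cyl[OF G(1)]) (use G(2) in auto)
  also have "\<dots> = emeasure G {s<..} ^ card ?J" by simp
  also have "card ?J = Suc t" using card_image[OF inj] by simp
  also have "emeasure G {s<..} ^ Suc t = ennreal ((1 - measure G {..s}) ^ Suc t)"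
  proof -
    have nn: "0 \<le> 1 - measure G {..s}" using prob_space.prob_le_1[OF G(1)] by simp
    show ?thesis by (simp only: G_gt ennreal_power[OF nn])
  qed
  finally show ?thesis .
qed

lemma tail_g:
  "emeasure (env G) {\<omega> \<in> space (env G). t < gfirst s \<omega> x (Rh s \<omega> x)} \<le> ennreal ((1 - measure G {..s}) ^ Suc t)"
proof -
  let ?c = "ennreal ((1 - measure G {..s}) ^ Suc t)"
  define W where "W y = {\<omega> \<in> space (env G). Rh s \<omega> x = y \<and> (\<forall>j\<le>t. s < \<omega> (int x, int (y + j)))}" for y
  define R where "R y = {\<omega> \<in> space (env G). Rh s \<omega> x = y}" for y
  have Wm: "W y \<in> sets (env G)" for y unfolding W_def by measurable
  have Rm: "R y \<in> sets (env G)" for y unfolding R_def by measurable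
  have sub: "{\<omega> \<in> space (env G). t < gfirst s \<omega> x (Rh s \<omega> x)} \<subseteq> (\<Union>y. W y)"
  proof
    fix \<omega> assume "\<omega> \<in> {\<omega> \<in> space (env G). t < gfirst s \<omega> x (Rh s \<omega> x)}"
    then have "t < gfirst s \<omega> x (Rh s \<omega> x)" by simp
    have "\<forall>j\<le>t. s < \<omega> (int x, int (Rh s \<omega> x + j))"
    proof (intro allI impI)
      fix j assume "j \<le> t"
      with \<open>t < _\<close> have "j < (LEAST k. \<omega> (int x, int (Rh s \<omega> x + k)) \<le> s)" unfolding gfirst_def by simp
      from not_less_Least[OF this] show "s < \<omega> (int x, int (Rh s \<omega> x + j))" by simp
    qed
    then show "\<omega> \<in> (\<Union>y. W y)" by (auto simp: W_def spE)
  qed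
  have eqW: "emeasure (env G) (W y) = emeasure (env G) (R y) * ?c" for y
  proof -
    have "emeasure (env G) (W y) = emeasure (env G) (R y) *
        emeasure (env G) {\<omega> \<in> space (env G). \<forall>j\<le>t. s < \<omega> (int x, int (y + j))}"
      unfolding W_def R_def
      by (rule env_indep[OF G, where A="{i. fst i < int x}" and B="{i. fst i = int x}"])
         (auto intro: Rh_dep)
    then show ?thesis using col_cyl by simp
  qed
  have "emeasure (env G) {\<omega> \<in> space (env G). t < gfirst s \<omega> x (Rh s \<omega> x)} \<le> emeasure (env G) (\<Union>y. W y)"
    by (rule emeasure_mono[OF sub]) (use Wm in auto)
  also have "\<dots> \<le> (\<Sum>y. emeasure (env G) (W y))"
    by (rule emeasure_subadditive_countably) (use Wm in auto)
  also have "\<dots> = (\<Sum>y. emeasure (env G) (R y)) * ?c" by (simp add: eqW)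
  also have "\<dots> \<le> 1 * ?c"
  proof (rule mult_right_mono)
    have "(\<Sum>y. emeasure (env G) (R y)) = emeasure (env G) (\<Union>y. R y)"
      by (rule suminf_emeasure) (use Rm in \<open>auto simp: disjoint_family_on_def R_def\<close>)
    also have "\<dots> \<le> 1" by (rule M.emeasure_le_1)
    finally show "(\<Sum>y. emeasure (env G) (R y)) \<le> 1" .
  qed simp
  finally show ?thesis by simp
qed

lemma Eg:
  assumes q: "measure G {..s} > 0"
  shows "(\<integral>\<^sup>+\<omega>. of_nat (gfirst s \<omega> x (Rh s \<omega> x)) \<partial>env G) \<le> ennreal ((1 - measure G {..s}) / measure G {..s})"
proof -
  let ?q = "measure G {..s}"
  have q1: "?q \<le> 1" using prob_space.prob_le_1[OF G(1)] by simp
  have meas: "(\<lambda>\<omega>. gfirst s \<omega> x (Rh s \<omega> x)) \<in> measurable (env G) (count_space UNIV)"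
    by (rule measurable_compose_countable[OF gfirst_meas Rh_meas])
  have sums: "(\<lambda>t. (1 - ?q) ^ Suc t) sums ((1 - ?q) / ?q)"
  proof -
    have "(\<lambda>t. (1 - ?q) ^ t) sums (1 / (1 - (1 - ?q)))"
      by (rule geometric_sums) (use q q1 in simp)
    from sums_mult[OF this, of "1 - ?q"] show ?thesis by simp
  qed
  have "(\<integral>\<^sup>+\<omega>. of_nat (gfirst s \<omega> x (Rh s \<omega> x)) \<partial>env G)
      = (\<Sum>t. emeasure (env G) {\<omega> \<in> space (env G). t < gfirst s \<omega> x (Rh s \<omega> x)})"
    by (rule nn_integral_nat_function[OF meas])
  also have "\<dots> \<le> (\<Sum>t. ennreal ((1 - ?q) ^ Suc t))"
    by (rule suminf_le[OF tail_g summableI summableI])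
  also have "\<dots> = ennreal ((1 - ?q) / ?q)"
    using suminf_ennreal2[of "\<lambda>t. (1 - ?q) ^ Suc t"] sums q1 unfolding sums_iff by (metis diff_ge_0_iff_ge zero_le_power)
  finally show ?thesis .
qed

lemma ER:
  assumes q: "measure G {..s} > 0"
  shows "(\<integral>\<^sup>+\<omega>. of_nat (Rh s \<omega> n) \<partial>env G) \<le> of_nat n * ennreal ((1 - measure G {..s}) / measure G {..s})"
proof (induction n)
  case 0 then show ?case by simp
next
  case (Suc n)
  have m1: "(\<lambda>\<omega>. of_nat (Rh s \<omega> n) :: ennreal) \<in> borel_measurable (env G)" by measurable
  have m2: "(\<lambda>\<omega>. of_nat (gfirst s \<omega> n (Rh s \<omega> n)) :: ennreal) \<in> borel_measurable (env G)"
  proof -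
    have "(\<lambda>\<omega>. gfirst s \<omega> n (Rh s \<omega> n)) \<in> measurable (env G) (count_space UNIV)"
      by (rule measurable_compose_countable[OF gfirst_meas Rh_meas])
    then show ?thesis by (rule measurable_compose) simp
  qed
  have "(\<integral>\<^sup>+\<omega>. of_nat (Rh s \<omega> (Suc n)) \<partial>env G)
     = (\<integral>\<^sup>+\<omega>. of_nat (Rh s \<omega> n) \<partial>env G) + (\<integral>\<^sup>+\<omega>. of_nat (gfirst s \<omega> n (Rh s \<omega> n)) \<partial>env G)"
    by (simp add: nn_integral_add[OF m1 m2])
  also have "\<dots> \<le> of_nat n * ennreal ((1 - measure G {..s}) / measure G {..s}) + ennreal ((1 - measure G {..s}) / measure G {..s})"
    by (intro add_mono Suc.IH Eg q)
  also have "\<dots> = of_nat (Suc n) * ennreal ((1 - measure G {..s}) / measure G {..s})"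
    by (simp add: algebra_simps)
  finally show ?case .
qed

lemma Markov_Rh:
  assumes q: "measure G {..s} > 0" and n: "n > 0" and c: "c > 0"
  shows "measure (env G) {\<omega> \<in> space (env G). c * real n < real (Rh s \<omega> n)}
     \<le> ((1 - measure G {..s}) / measure G {..s}) / c"
proof -
  let ?mu = "(1 - measure G {..s}) / measure G {..s}"
  let ?A = "{\<omega> \<in> space (env G). c * real n < real (Rh s \<omega> n)}"
  have Am: "?A \<in> sets (env G)" by measurable
  have mu0: "?mu \<ge> 0" using q prob_space.prob_le_1[OF G(1), of "{..s}"] by simp
  have "ennreal (c * real n) * emeasure (env G) ?A = (\<integral>\<^sup>+\<omega>. ennreal (c * real n) * indicator ?A \<omega> \<partial>env G)"
    by (rule nn_integral_cmult_indicator[symmetric, OF Am])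
  also have "\<dots> \<le> (\<integral>\<^sup>+\<omega>. of_nat (Rh s \<omega> n) \<partial>env G)"
  proof (rule nn_integral_mono)
    fix \<omega> show "ennreal (c * real n) * indicator ?A \<omega> \<le> of_nat (Rh s \<omega> n)"
      by (cases "\<omega> \<in> ?A") (auto simp: ennreal_of_nat_eq_real_of_nat intro!: ennreal_leI)
  qed
  also have "\<dots> \<le> of_nat n * ennreal ?mu" by (rule ER[OF q])
  finally have ineq: "ennreal (c * real n) * emeasure (env G) ?A \<le> of_nat n * ennreal ?mu" .
  have e1: "ennreal (c * real n * measure (env G) ?A) = ennreal (c * real n) * emeasure (env G) ?A"
    unfolding M.emeasure_eq_measure by (rule ennreal_mult) (use c in auto)
  have e2: "ennreal (real n * ?mu) = of_nat n * ennreal ?mu"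
    unfolding ennreal_of_nat_eq_real_of_nat by (rule ennreal_mult) (use mu0 in auto)
  have "ennreal (c * real n * measure (env G) ?A) \<le> ennreal (real n * ?mu)"
    using ineq e1 e2 by simp
  then have "c * real n * measure (env G) ?A \<le> real n * ?mu"
  proof (subst (asm) ennreal_le_iff)
    show "0 \<le> real n * ?mu" by (rule mult_nonneg_nonneg) (use mu0 in auto)
  qed
  then have "real n * (c * measure (env G) ?A) \<le> real n * ?mu" by (simp add: algebra_simps)
  then have "c * measure (env G) ?A \<le> ?mu" by (rule mult_left_le_imp_le) (use n in simp)
  then show ?thesis unfolding pos_le_divide_eq[OF c] by (simp add: mult.commute)
qed

end

lemma AE_exists:
  assumes "prob_space M" "AE x in M. P x" shows "\<exists>x\<in>space M. P x"
proof (rule ccontr)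
  assume "\<not> ?thesis"
  from AE_E[OF assms(2)] obtain N where N: "{x \<in> space M. \<not> P x} \<subseteq> N" "emeasure M N = 0" "N \<in> sets M" .
  with \<open>\<not> ?thesis\<close> have "space M \<subseteq> N" by auto
  then have "emeasure M (space M) \<le> emeasure M N" using N by (intro emeasure_mono) auto
  then show False using N prob_space.emeasure_space_1[OF assms(1)] by simp
qed

lemma freq_exists:
  assumes M: "prob_space M" and E: "\<And>n. E n \<in> sets M" and d: "\<And>n. n \<ge> N \<Longrightarrow> measure M (E n) \<ge> \<delta>"
    and d0: "\<delta> > 0" and Q: "AE \<omega> in M. Q \<omega>"
  shows "\<exists>\<omega>\<in>space M. Q \<omega> \<and> (\<exists>\<^sub>F n in sequentially. \<omega> \<in> E n)"
proof (rule ccontr)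
  interpret M: prob_space M by (rule M)
  assume "\<not> ?thesis"
  then have h: "\<And>\<omega>. \<omega> \<in> space M \<Longrightarrow> Q \<omega> \<Longrightarrow> (\<forall>\<^sub>F n in sequentially. \<omega> \<notin> E n)"
    by (auto simp: not_frequently)
  define F where "F k = {\<omega> \<in> space M. \<forall>n\<ge>k. \<omega> \<notin> E n}" for k
  have Fm: "F k \<in> sets M" for k
  proof -
    have "F k = space M - (\<Union>n\<in>{k..}. E n)" by (auto simp: F_def)
    then show ?thesis using E by auto
  qed
  have inc: "incseq F" unfolding incseq_def F_def by auto
  have "AE \<omega> in M. Q \<omega> \<longrightarrow> \<omega> \<in> (\<Union>k. F k)"
  proof (rule AE_I2, rule impI)
    fix \<omega> assume "\<omega> \<in> space M" "Q \<omega>"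
    from h[OF this] obtain k where "\<forall>n\<ge>k. \<omega> \<notin> E n" by (auto simp: eventually_sequentially)
    then show "\<omega> \<in> (\<Union>k. F k)" using \<open>\<omega> \<in> space M\<close> by (auto simp: F_def)
  qed
  with Q have "AE \<omega> in M. \<omega> \<in> (\<Union>k. F k)" by (rule AE_mp)
  then have one: "measure M (\<Union>k. F k) = 1"
    using M.prob_eq_1[of "\<Union>k. F k"] Fm by auto
  have lim: "(\<lambda>k. measure M (F k)) \<longlonglongrightarrow> measure M (\<Union>k. F k)"
    by (rule M.finite_Lim_measure_incseq) (use Fm inc in auto)
  have "measure M (F k) \<le> 1 - \<delta>" if "k \<ge> N" for k
  proof -
    have "F k \<subseteq> space M - E k" by (auto simp: F_def)
    then have "measure M (F k) \<le> measure M (space M - E k)"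
      by (intro M.finite_measure_mono) (use E in auto)
    also have "\<dots> = 1 - measure M (E k)" using M.prob_compl[OF E] by simp
    finally show ?thesis using d[OF that] by simp
  qed
  then have "measure M (\<Union>k. F k) \<le> 1 - \<delta>"
    by (intro LIMSEQ_le_const2[OF lim]) auto
  with one d0 show False by simp
qed

lemma lim_le_freq:
  fixes X b :: "nat \<Rightarrow> real"
  assumes X: "X \<longlonglongrightarrow> L" and b: "b \<longlonglongrightarrow> B" and f: "\<exists>\<^sub>F n in sequentially. X n \<le> b n"
  shows "L \<le> B"
proof (rule ccontr)
  assume "\<not> L \<le> B"
  then have lt: "B < (L + B) / 2" "(L + B) / 2 < L" by auto
  have "\<forall>\<^sub>F n in sequentially. (L + B) / 2 < X n" using order_tendstoD(1)[OF X lt(2)] .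
  moreover have "\<forall>\<^sub>F n in sequentially. b n < (L + B) / 2" using order_tendstoD(2)[OF b lt(1)] .
  ultimately have "\<forall>\<^sub>F n in sequentially. \<not> X n \<le> b n" by eventually_elim auto
  with f show False by (simp add: frequently_def)
qed

lemma ceil_ratio:
  assumes "v \<ge> 0"
  shows "(\<lambda>n. real_of_int \<lceil>v * real n\<rceil> / real n) \<longlonglongrightarrow> v"
proof (rule tendsto_sandwich[of "\<lambda>n. v" _ _ "\<lambda>n. v + 1 / real n"])
  show "\<forall>\<^sub>F n in sequentially. v \<le> real_of_int \<lceil>v * real n\<rceil> / real n"
    using eventually_gt_at_top[of 0]
  proof eventually_elim
    case (elim n)
    then show ?case by (simp add: pos_le_divide_eq)
  qed
  show "\<forall>\<^sub>F n in sequentially. real_of_int \<lceil>v * real n\<rceil> / real n \<le> v + 1 / real n"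
    using eventually_gt_at_top[of 0]
  proof eventually_elim
    case (elim n)
    have "real_of_int \<lceil>v * real n\<rceil> \<le> v * real n + 1" by linarith
    then show ?case using elim by (simp add: divide_simps)
  qed
  show "(\<lambda>n. v + 1 / real n) \<longlonglongrightarrow> v" using tendsto_add[OF tendsto_const lim_inverse_n', of v] by simp
qed simp

lemma Reach_exists: "\<exists>c. Reach \<omega> (0,0) (int n, b) c"
proof -
  have "\<exists>c. Reach \<omega> (0,0) (int n, 0) c"
  proof (induction n)
    case 0 then show ?case using Reach_refl by auto
  next
    case (Suc n)
    then obtain c where "Reach \<omega> (0,0) (int n, 0) c" by auto
    from Reach_right[OF this] have "Reach \<omega> (0,0) (int (Suc n), 0) (c + \<omega> (int n, 0))" by (simp add: add.commute)
    then show ?case by blast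
  qed
  then obtain c where "Reach \<omega> (0,0) (int n, 0) c" by auto
  from Reach_vert[OF this, of b] show ?thesis by auto
qed

lemma passage_lower:
  assumes "\<forall>i. \<omega> i \<ge> t" "t \<ge> 0" "m \<ge> 0"
  shows "passage_time \<omega> (0,0) (int n, m) \<ge> t * real n + real_of_int m"
  unfolding passage_time_def
proof (rule cInf_greatest)
  obtain c where "Reach \<omega> (0,0) (int n, m) c" using Reach_exists by blast
  then show "{path_time \<omega> p |p. is_path (0, 0) (int n, m) p} \<noteq> {}" by (auto simp: Reach_def)
  fix x assume "x \<in> {path_time \<omega> p |p. is_path (0, 0) (int n, m) p}"
  then obtain p where p: "is_path (0,0) (int n, m) p" "x = path_time \<omega> p" by auto
  from path_lower[OF assms(2) assms(1), of p] p(1)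
  show "t * real n + real_of_int m \<le> x" using p assms(3) by (auto simp: is_path_def)
qed

context
  fixes G :: "real measure"
  assumes G: "prob_space G" "sets G = sets borel"
begin

interpretation M: prob_space "env G" unfolding env_def by (rule prob_space_PiM) (use G in auto)

lemma AE_ge:
  assumes "measure G {..<a} = 0"
  shows "AE \<omega> in env G. \<forall>i. \<omega> i \<ge> a"
proof (subst AE_all_countable, rule allI)
  fix i :: vert
  have "AE x in G. a \<le> x"
  proof (rule AE_I')
    show "{..<a} \<in> null_sets G"
      using assms G prob_space.emeasure_space_1[OF G(1)] finite_measure.emeasure_eq_measure[OF prob_space.finite_measure[OF G(1)], of "{..<a}"]
      by (auto simp: null_sets_def)
    show "{x \<in> space G. \<not> a \<le> x} \<subseteq> {..<a}" by auto
  qed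
  from AE_PiM_component[of UNIV "\<lambda>_. G" i "\<lambda>x. a \<le> x", OF _ _ this]
  show "AE \<omega> in env G. a \<le> \<omega> i"
    unfolding env_def using G by auto
qed

lemma AE_good:
  assumes q: "measure G {..s} > 0"
  shows "AE \<omega> in env G. \<forall>x y. \<exists>k. \<omega> (int x, int (y + k)) \<le> s"
proof (subst AE_all_countable, rule allI, subst AE_all_countable, rule allI)
  fix x y :: nat
  let ?q = "measure G {..s}"
  define B where "B = {\<omega> \<in> space (env G). \<forall>k. s < \<omega> (int x, int (y + k))}"
  have Bm: "B \<in> sets (env G)" unfolding B_def using cm[OF G] by measurable
  have "measure (env G) B \<le> (1 - ?q) ^ Suc t" for t
  proof -
    have "B \<subseteq> {\<omega> \<in> space (env G). \<forall>j\<le>t. s < \<omega> (int x, int (y + j))}" by (auto simp: B_def)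
    then have "emeasure (env G) B \<le> emeasure (env G) {\<omega> \<in> space (env G). \<forall>j\<le>t. s < \<omega> (int x, int (y + j))}"
      by (rule emeasure_mono) (use cm[OF G] in measurable)
    also have "\<dots> = ennreal ((1 - ?q) ^ Suc t)" by (rule col_cyl[OF G])
    finally show ?thesis
      using prob_space.prob_le_1[OF G(1), of "{..s}"]
      by (simp add: M.emeasure_eq_measure ennreal_le_iff)
  qed
  moreover have "(\<lambda>t. (1 - ?q) ^ Suc t) \<longlonglongrightarrow> 0"
    using LIMSEQ_power_zero[of "1 - ?q"] q prob_space.prob_le_1[OF G(1), of "{..s}"]
    by (intro LIMSEQ_Suc) simp
  ultimately have "measure (env G) B \<le> 0"
    by (intro LIMSEQ_le_const[where a = "measure (env G) B", OF \<open>_ \<longlonglongrightarrow> 0\<close>, THEN order_trans[rotated]]) auto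
  then have "B \<in> null_sets (env G)" using Bm
    by (auto simp: null_sets_def M.emeasure_eq_measure intro: antisym measure_nonneg)
  then show "AE \<omega> in env G. \<exists>k. \<omega> (int x, int (y + k)) \<le> s"
    by (rule AE_I') (auto simp: B_def not_le)
qed

lemma upper:
  assumes G0: "measure G {..<0} = 0"
    and conv: "AE \<omega> in env G. (\<lambda>n. passage_time \<omega> (0, 0) (int n, \<lceil>v * real n\<rceil>) / real n) \<longlonglongrightarrow> L"
    and v: "v \<ge> 0" and q: "measure G {..s} > 0"
    and c: "c > (1 - measure G {..s}) / measure G {..s}"
  shows "L \<le> s + v + 2 * max 0 (c - v)"
proof -
  let ?q = "measure G {..s}"
  let ?mu = "(1 - ?q) / ?q"
  have q1: "?q \<le> 1" using prob_space.prob_le_1[OF G(1)] by simp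
  have mu0: "?mu \<ge> 0" using q q1 by simp
  have c0: "c > 0" using c mu0 by linarith
  define E where "E n = {\<omega> \<in> space (env G). real (Rh s \<omega> n) \<le> c * real n}" for n
  have Em: "E n \<in> sets (env G)" for n unfolding E_def using Rh_meas[OF G] by measurable
  have Ed: "measure (env G) (E n) \<ge> 1 - ?mu / c" if "n \<ge> 1" for n
  proof -
    have A: "{\<omega> \<in> space (env G). c * real n < real (Rh s \<omega> n)} \<in> sets (env G)"
      using Rh_meas[OF G] by measurable
    have "E n = space (env G) - {\<omega> \<in> space (env G). c * real n < real (Rh s \<omega> n)}"
      by (auto simp: E_def)
    then have "measure (env G) (E n) = 1 - measure (env G) {\<omega> \<in> space (env G). c * real n < real (Rh s \<omega> n)}"
      using M.prob_compl[OF A] by simp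
    moreover have "measure (env G) {\<omega> \<in> space (env G). c * real n < real (Rh s \<omega> n)} \<le> ?mu / c"
      by (rule Markov_Rh[OF G q _ c0]) (use that in simp)
    ultimately show ?thesis by simp
  qed
  have "?mu / c < 1" using c c0 by (simp only: divide_less_eq_1_pos)
  then have d0: "1 - ?mu / c > 0" by linarith
  have AE3: "AE \<omega> in env G. (\<forall>i. \<omega> i \<ge> 0) \<and> (\<forall>x y. \<exists>k. \<omega> (int x, int (y + k)) \<le> s) \<and>
      (\<lambda>n. passage_time \<omega> (0, 0) (int n, \<lceil>v * real n\<rceil>) / real n) \<longlonglongrightarrow> L"
    using AE_ge[OF G0] AE_good[OF q] conv by eventually_elim auto
  obtain \<omega> where \<omega>: "\<forall>i. \<omega> i \<ge> 0" "\<forall>x y. \<exists>k. \<omega> (int x, int (y + k)) \<le> s"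
    "(\<lambda>n. passage_time \<omega> (0, 0) (int n, \<lceil>v * real n\<rceil>) / real n) \<longlonglongrightarrow> L"
    and fr: "\<exists>\<^sub>F n in sequentially. \<omega> \<in> E n"
    using freq_exists[where E=E and N=1, OF M.prob_space_axioms Em Ed d0 AE3] by auto
  let ?b = "\<lambda>n. s + real_of_int \<lceil>v * real n\<rceil> / real n + 2 * max 0 (c - v)"
  have "\<exists>\<^sub>F n in sequentially. passage_time \<omega> (0, 0) (int n, \<lceil>v * real n\<rceil>) / real n \<le> ?b n"
    using frequently_eventually_conj[OF fr eventually_gt_at_top[of 0]]
  proof (rule frequently_elim1)
    fix n assume n: "0 < n \<and> \<omega> \<in> E n"
    let ?R = "Rh s \<omega> n" and ?m = "\<lceil>v * real n\<rceil>"
    have R: "real ?R \<le> c * real n" using n by (auto simp: E_def)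
    have "Reach \<omega> (0,0) (int n, ?m) (real ?R + real n * s + \<bar>real_of_int (?m - int ?R)\<bar>)"
      using Reach_vert[OF Rh_path[OF \<omega>(2)], of n ?m] by simp
    then have P: "passage_time \<omega> (0,0) (int n, ?m) \<le> real ?R + real n * s + \<bar>real_of_int (?m - int ?R)\<bar>"
      by (rule passage_le[OF \<omega>(1)])
    have m: "real_of_int ?m \<ge> v * real n" by linarith
    have "real ?R + \<bar>real_of_int (?m - int ?R)\<bar> \<le> real_of_int ?m + 2 * (real n * max 0 (c - v))"
    proof (cases "real ?R \<le> real_of_int ?m")
      case True then show ?thesis by (simp add: abs_if)
    next
      case False
      have e: "real n * (c - v) = c * real n - v * real n" by (simp add: algebra_simps)
      have "real ?R - real_of_int ?m \<le> real n * (c - v)" unfolding e using R m by linarith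
      also have "\<dots> \<le> real n * max 0 (c - v)" by (intro mult_left_mono) auto
      finally show ?thesis using False by (simp add: abs_if)
    qed
    then have "passage_time \<omega> (0,0) (int n, ?m) \<le> real n * s + real_of_int ?m + real n * (2 * max 0 (c - v))"
      using P by simp
    then have "passage_time \<omega> (0,0) (int n, ?m) / real n \<le> (real n * s + real_of_int ?m + real n * (2 * max 0 (c - v))) / real n"
      using n by (intro divide_right_mono) auto
    also have "\<dots> = ?b n" using n by (simp add: field_simps)
    finally show "passage_time \<omega> (0,0) (int n, ?m) / real n \<le> ?b n" .
  qed
  moreover have "?b \<longlonglongrightarrow> s + v + 2 * max 0 (c - v)"
    by (intro tendsto_intros ceil_ratio v)
  ultimately show ?thesis using lim_le_freq[OF \<omega>(3)] by blast
qed

lemma lower: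
  assumes t: "t \<ge> 0" "measure G {..<t} = 0"
    and conv: "AE \<omega> in env G. (\<lambda>n. passage_time \<omega> (0, 0) (int n, \<lceil>v * real n\<rceil>) / real n) \<longlonglongrightarrow> L"
    and v: "v \<ge> 0"
  shows "t + v \<le> L"
proof -
  have "AE \<omega> in env G. (\<forall>i. \<omega> i \<ge> t) \<and> (\<lambda>n. passage_time \<omega> (0, 0) (int n, \<lceil>v * real n\<rceil>) / real n) \<longlonglongrightarrow> L"
    using AE_ge[OF t(2)] conv by eventually_elim auto
  from AE_exists[OF M.prob_space_axioms this] obtain \<omega> where
    \<omega>: "\<forall>i. \<omega> i \<ge> t" "(\<lambda>n. passage_time \<omega> (0, 0) (int n, \<lceil>v * real n\<rceil>) / real n) \<longlonglongrightarrow> L" by auto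
  show ?thesis
  proof (rule LIMSEQ_le_const[OF \<omega>(2)], intro exI[of _ 1] allI impI)
    fix n :: nat assume n: "n \<ge> 1"
    have m: "real_of_int \<lceil>v * real n\<rceil> \<ge> v * real n" by linarith
    have h: "0 \<le> v * real n" using v by simp
    have m0: "0 \<le> \<lceil>v * real n\<rceil>" using h by simp
    have "t * real n + real_of_int \<lceil>v * real n\<rceil> \<le> passage_time \<omega> (0, 0) (int n, \<lceil>v * real n\<rceil>)"
      by (rule passage_lower[OF \<omega>(1) t(1) m0])
    moreover have "(t + v) * real n = t * real n + v * real n" by (simp add: algebra_simps)
    ultimately have "(t + v) * real n \<le> passage_time \<omega> (0, 0) (int n, \<lceil>v * real n\<rceil>)"
      using m by linarith
    then show "t + v \<le> passage_time \<omega> (0, 0) (int n, \<lceil>v * real n\<rceil>) / real n"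
      using n by (simp add: pos_le_divide_eq)
  qed
qed

end

theorem proposition3p12:
  fixes G :: "real measure" and \<Lambda> :: "real \<Rightarrow> real"
  assumes "prob_space G"
    and "sets G = sets borel"
    and "measure G {..<0} = 0"
    and \<Lambda>: "\<And>v. v \<ge> 0 \<Longrightarrow> AE \<omega> in env G.
          (\<lambda>n. passage_time \<omega> (0, 0) (int n, \<lceil>v * real n\<rceil>) / real n) \<longlonglongrightarrow> \<Lambda> v"
  defines "t0 \<equiv> Inf {x. measure G {0..x} > 0}"
  shows "((\<lambda>v. \<Lambda> v - v - t0) \<longlongrightarrow> 0) at_top \<and>
         (measure G {t0} > 0 \<longrightarrow>
           (\<forall>v \<ge> (1 - measure G {t0}) / measure G {t0}. \<Lambda> v = v + t0))"
proof -
  have G: "prob_space G" "sets G = sets borel" by fact+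
  interpret Gp: prob_space G by (rule G(1))
  have G0: "measure G {..<0} = 0" by fact
  have sG: "space G = UNIV" using sets_eq_imp_space_eq[OF G(2)] by simp
  have setsI: "A \<in> sets G" if "A \<in> sets borel" for A using that G(2) by simp
  define S where "S = {x. measure G {0..x} > 0}"
  have t0S: "t0 = Inf S" by (simp add: t0_def S_def)
  have Sge: "x \<ge> 0" if "x \<in> S" for x
  proof (rule ccontr)
    assume "\<not> x \<ge> 0" then have "{0..x} = {}" by auto
    with that show False by (simp add: S_def)
  qed
  have bdd: "bdd_below S" unfolding bdd_below_def using Sge by blast
  have Sne: "S \<noteq> {}"
  proof
    assume "S = {}"
    have z: "emeasure G {0..real k} = 0" for k
    proof -
      have "\<not> measure G {0..real k} > 0" using \<open>S = {}\<close> unfolding S_def by blast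
      then have "measure G {0..real k} = 0" using measure_nonneg[of G "{0..real k}"] by linarith
      then show ?thesis by (simp add: Gp.emeasure_eq_measure)
    qed
    have U: "emeasure G (\<Union>k. {0..real k}) = 0"
      by (rule emeasure_UN_eq_0) (use z setsI in auto)
    have N: "emeasure G {..<0} = 0" using G0 Gp.emeasure_eq_measure by simp
    have "space G \<subseteq> {..<0} \<union> (\<Union>k. {0..real k})"
    proof
      fix x :: real assume "x \<in> space G"
      show "x \<in> {..<0} \<union> (\<Union>k. {0..real k})"
      proof (cases "x < 0")
        case False
        obtain k where "x \<le> real k" using real_arch_simple by blast
        with False show ?thesis by auto
      qed simp
    qed
    then have "emeasure G (space G) \<le> emeasure G ({..<0} \<union> (\<Union>k. {0..real k}))"
      by (intro emeasure_mono) (use setsI in auto)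
    also have "\<dots> \<le> emeasure G {..<0} + emeasure G (\<Union>k. {0..real k})"
      by (intro emeasure_subadditive) (use setsI in auto)
    finally show False using U N Gp.emeasure_space_1 by simp
  qed
  have t0ge: "t0 \<ge> 0" unfolding t0S by (rule cInf_greatest[OF Sne]) (rule Sge)
  have t0low: "measure G {..<t0} = 0"
  proof -
    have z: "emeasure G {0..t0 - 1 / real (Suc k)} = 0" for k
    proof -
      have "t0 - 1 / real (Suc k) \<notin> S"
      proof
        assume "t0 - 1 / real (Suc k) \<in> S"
        from cInf_lower[OF this bdd] show False unfolding t0S[symmetric] by simp
      qed
      then have "\<not> measure G {0..t0 - 1 / real (Suc k)} > 0" unfolding S_def by blast
      then have "measure G {0..t0 - 1 / real (Suc k)} = 0"
        using measure_nonneg[of G "{0..t0 - 1 / real (Suc k)}"] by linarith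
      then show ?thesis by (simp add: Gp.emeasure_eq_measure)
    qed
    have U: "emeasure G (\<Union>k. {0..t0 - 1 / real (Suc k)}) = 0"
      by (rule emeasure_UN_eq_0) (use z setsI in auto)
    have N: "emeasure G {..<0} = 0" using G0 Gp.emeasure_eq_measure by simp
    have "{..<t0} \<subseteq> {..<0} \<union> (\<Union>k. {0..t0 - 1 / real (Suc k)})"
    proof
      fix x :: real assume x: "x \<in> {..<t0}"
      show "x \<in> {..<0} \<union> (\<Union>k. {0..t0 - 1 / real (Suc k)})"
      proof (cases "x < 0")
        case False
        from x have "0 < t0 - x" by simp
        from reals_Archimedean[OF this] obtain k where "inverse (real (Suc k)) < t0 - x" by blast
        then have "x \<le> t0 - 1 / real (Suc k)" by (simp add: inverse_eq_divide)
        with False show ?thesis by auto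
      qed simp
    qed
    then have "emeasure G {..<t0} \<le> emeasure G ({..<0} \<union> (\<Union>k. {0..t0 - 1 / real (Suc k)}))"
      by (intro emeasure_mono) (use setsI in auto)
    also have "\<dots> \<le> emeasure G {..<0} + emeasure G (\<Union>k. {0..t0 - 1 / real (Suc k)})"
      by (intro emeasure_subadditive) (use setsI in auto)
    finally have "emeasure G {..<t0} = 0" using U N by simp
    then show ?thesis by (simp add: Gp.emeasure_eq_measure)
  qed
  have qpos: "measure G {..t0 + e} > 0" if "e > 0" for e
  proof -
    have "Inf S < t0 + e" using that t0S by simp
    then obtain x where x: "x \<in> S" "x < t0 + e" using cInf_less_iff[OF Sne bdd] by blast
    have "measure G {0..x} \<le> measure G {..t0 + e}"
      by (rule Gp.finite_measure_mono) (use x setsI in auto)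
    with x show ?thesis by (simp add: S_def)
  qed
  have low: "t0 + v \<le> \<Lambda> v" if "v \<ge> 0" for v
    by (rule lower[OF G t0ge t0low \<Lambda>[OF that] that])
  have part1: "((\<lambda>v. \<Lambda> v - v - t0) \<longlongrightarrow> 0) at_top"
  proof (rule tendstoI)
    fix e :: real assume e: "e > 0"
    let ?s = "t0 + e / 2"
    let ?q = "measure G {..?s}"
    have q: "?q > 0" using qpos e by simp
    define c where "c = (1 - ?q) / ?q + 1"
    have c: "c > (1 - ?q) / ?q" by (simp add: c_def)
    show "\<forall>\<^sub>F v in at_top. dist (\<Lambda> v - v - t0) 0 < e"
      unfolding eventually_at_top_linorder
    proof (intro exI[of _ "max 0 c"] allI impI)
      fix v assume v: "v \<ge> max 0 c"
      have up: "\<Lambda> v \<le> ?s + v + 2 * max 0 (c - v)"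
        by (rule upper[OF G G0 \<Lambda> _ q c]) (use v in auto)
      have "max 0 (c - v) = 0" using v by simp
      with up low[of v] v show "dist (\<Lambda> v - v - t0) 0 < e"
        using e by (auto simp: dist_real_def)
    qed
  qed
  have part2: "\<Lambda> v = v + t0" if p: "measure G {t0} > 0" and v: "v \<ge> (1 - measure G {t0}) / measure G {t0}" for v
  proof -
    let ?p = "measure G {t0}" and ?q = "measure G {..t0}"
    have p1: "?p \<le> 1" by (rule Gp.prob_le_1)
    have pq: "?p \<le> ?q" by (rule Gp.finite_measure_mono) (use setsI in auto)
    have q: "?q > 0" using p pq by simp
    have v0: "v \<ge> 0" using v p p1 by (meson divide_nonneg_pos diff_ge_0_iff_ge order_trans)
    have "(1 - ?q) / ?q = 1 / ?q - 1" using q by (simp add: field_simps)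
    also have "\<dots> \<le> 1 / ?p - 1" using p pq by (simp add: frac_le)
    also have "\<dots> = (1 - ?p) / ?p" using p by (simp add: field_simps)
    finally have mu: "(1 - ?q) / ?q \<le> v" using v by simp
    have "\<Lambda> v \<le> t0 + v"
    proof (rule field_le_epsilon)
      fix e :: real assume e: "e > 0"
      have "\<Lambda> v \<le> t0 + v + 2 * max 0 (v + e / 2 - v)"
        by (rule upper[OF G G0 \<Lambda>[OF v0] v0 q]) (use mu e in simp)
      then show "\<Lambda> v \<le> t0 + v + e" using e by simp
    qed
    with low[OF v0] show ?thesis by simp
  qed
  show ?thesis using part1 part2 by blast
qed

end
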